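(* Let $n=2t$, and let $\varphi:\mathbb{F}_{2^t}\times\mathbb{F}_{2^t}\to\mathbb{F}_{2^n}$ be an $\mathbb{F}_2$-linear bijection. Let $Q(x)=\sum_{i=1}^{t-1}Tr_1^n(x^{2^i+1})+Tr_1^{t}(x^{2^{t}+1})$ on $\mathbb{F}_{2^n}$ and $\tilde Q=Q\circ\varphi$. Let $G(x,y)=Tr_1^t(xy)$ on $\mathbb{F}_{2^t}\times\mathbb{F}_{2^t}$, and suppose $\alpha_1,\alpha_2,\alpha_3,\alpha_4,\beta,\gamma\in\mathbb{F}_{2^t}$ and $c\in\mathbb{F}_2$ satisfy $\tilde Q(x,y)=G(\alpha_1x+\alpha_2,\alpha_3y+\alpha_4)+Tr_1^t(\beta x)+Tr_1^t(\gamma y)+c$ for all $x,y$. Let $\pi$ be a complete mapping polynomial over $\mathbb{F}_{2^t}$, $h$ any polynomial over $\mathbb{F}_{2^t}$, and $f(x,y)=Tr_1^t(x\pi(y))+Tr_1^t(h(y))$. Then $$F(x,y)=f(\alpha_1x+\alpha_2,\alpha_3y+\alpha_4)+G(\alpha_1x+\alpha_2,\alpha_3y+\alpha_4)+Tr_1^t(\beta x)+Tr_1^t(\gamma y)+c$$ is bent-negabent, in the sense that $F\circ\varphi^{-1}:\mathbb{F}_{2^n}\to\mathbb{F}_2$ is bent-negabent.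
   Context: $Tr_1^m(z)=z+z^2+\dots+z^{2^{m-1}}$; $Tr=Tr_1^n$. A polynomial $\pi$ over $\mathbb{F}_{2^t}$ is a complete mapping polynomial if both $\pi(y)$ and $\pi(y)+y$ are permutations of $\mathbb{F}_{2^t}$. Fix a self-dual basis $\{\alpha_i'\}$ of $\mathbb{F}_{2^n}$ over $\mathbb{F}_2$ ($Tr(\alpha_i'\alpha_j')=\delta_{ij}$), identify $\mathbb{F}_{2^n}$ with $\mathbb{F}_2^n$ via coordinates, and let $wt(x)$ be the number of nonzero coordinates. For $g:\mathbb{F}_{2^n}\to\mathbb{F}_2$: $g$ is bent if $\left|\sum_x(-1)^{g(x)+Tr(\mu x)}\right|=2^{n/2}$ for all $\mu$; negabent if $\left|\sum_x(-1)^{g(x)+Tr(\mu x)}\mathrm{i}^{wt(x)}\right|=2^{n/2}$ for all $\mu$ ($\mathrm{i}=\sqrt{-1}$); bent-negabent if both. *)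

theory Defs
  imports "HOL-Analysis.Analysis" "HOL-Library.Z2" "HOL-Computational_Algebra.Polynomial"
begin

definition tr :: "nat \<Rightarrow> 'a::field \<Rightarrow> 'a" where
  "tr m z = (\<Sum>i<m. z ^ (2 ^ i))"

text \<open>Identify an element of the prime field {0,1} of a field with an element of F_2.\<close>
definition to_bit :: "'a::field \<Rightarrow> bit" where
  "to_bit z = (if z = 0 then 0 else 1)"

definition chi :: "bit \<Rightarrow> complex" where
  "chi b = (if b = 0 then 1 else -1)"

definition self_dual_basis :: "nat \<Rightarrow> (nat \<Rightarrow> 'a::field) \<Rightarrow> bool" where
  "self_dual_basis n a \<longleftrightarrow>
     (\<forall>i<n. \<forall>j<n. tr n (a i * a j) = (if i = j then 1 else 0))"

text \<open>Hamming weight of the coordinate vector w.r.t. the self-dual basis;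
  the i-th coordinate of x is Tr(a_i x).\<close>
definition wt :: "nat \<Rightarrow> (nat \<Rightarrow> 'a::field) \<Rightarrow> 'a \<Rightarrow> nat" where
  "wt n a x = card {i. i < n \<and> tr n (a i * x) \<noteq> 0}"

definition bent :: "nat \<Rightarrow> ('a::{field,finite} \<Rightarrow> bit) \<Rightarrow> bool" where
  "bent n g \<longleftrightarrow>
     (\<forall>\<mu>::'a. cmod (\<Sum>x\<in>UNIV. chi (g x + to_bit (tr n (\<mu> * x)))) = 2 powr (real n / 2))"

definition negabent :: "nat \<Rightarrow> (nat \<Rightarrow> 'a::{field,finite}) \<Rightarrow> ('a \<Rightarrow> bit) \<Rightarrow> bool" where
  "negabent n a g \<longleftrightarrow>
     (\<forall>\<mu>::'a. cmod (\<Sum>x\<in>UNIV. chi (g x + to_bit (tr n (\<mu> * x))) * \<i> ^ wt n a x)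
               = 2 powr (real n / 2))"

definition bent_negabent :: "nat \<Rightarrow> (nat \<Rightarrow> 'a::{field,finite}) \<Rightarrow> ('a \<Rightarrow> bit) \<Rightarrow> bool" where
  "bent_negabent n a g \<longleftrightarrow> bent n g \<and> negabent n a g"

definition complete_mapping :: "'b::field poly \<Rightarrow> bool" where
  "complete_mapping p \<longleftrightarrow> bij (poly p) \<and> bij (\<lambda>y. poly p y + y)"

end

theory Submission
  imports Defs
begin


lemma pow_card_same:
  fixes x :: "'k::{field,finite}"
  shows "x ^ CARD('k) = x"
proof (cases "x = 0")
  case False
  have "x * (\<Prod>y\<in>UNIV-{0}. x * y) = x * x ^ (CARD('k) - 1) * \<Prod>(UNIV-{0::'k})"
    by (simp add: prod.distrib mult_ac)
  also have "x * x ^ (CARD('k) - 1) = x ^ Suc (CARD('k) - 1)"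
    by (subst power_Suc) auto
  also have "Suc (CARD('k) - 1) = CARD('k)"
    using finite_UNIV_card_ge_0[where ?'a = 'k] by simp
  also have "(\<Prod>y\<in>UNIV-{0}. x * y) = (\<Prod>y\<in>UNIV-{0::'k}. y)"
    by (rule prod.reindex_bij_witness[of _ "\<lambda>y. y / x" "\<lambda>y. x * y"]) (use False in auto)
  finally show ?thesis
    by simp
qed (use finite_UNIV_card_ge_0[where ?'a = 'k] in auto)

lemma card_ge2: "CARD('k::{field,finite}) \<ge> 2"
proof -
  have "{0::'k, 1} \<subseteq> UNIV" by simp
  hence "card {0::'k,1} \<le> CARD('k)" by (intro card_mono) auto
  thus ?thesis by simp
qed

lemma m_pos:
  assumes "CARD('k::{field,finite}) = 2 ^ m" shows "m > 0"
  using card_ge2[where 'k='k] assms by (cases m) auto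

lemma char2:
  assumes "CARD('k::{field,finite}) = 2 ^ m" shows "(1::'k) + 1 = 0"
proof -
  have m: "m > 0" using m_pos assms by blast
  have "(-1::'k) ^ CARD('k) = -1" by (rule pow_card_same)
  moreover have "(-1::'k) ^ CARD('k) = 1" using m assms by (simp add: power_minus1_even)
  ultimately have "(-1::'k) = 1" by simp
  thus ?thesis by (metis add.right_inverse)
qed

lemma char2_add_self:
  assumes "CARD('k::{field,finite}) = 2 ^ m" shows "(x::'k) + x = 0"
proof -
  have "x + x = (1+1)*x" by (simp add: algebra_simps)
  thus ?thesis using char2[OF assms] by simp
qed

lemma char2_neg:
  assumes "CARD('k::{field,finite}) = 2 ^ m" shows "-(x::'k) = x"
  using char2_add_self[OF assms, of x] by (metis add_eq_0_iff2) 

lemma char2_minus: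
  assumes "CARD('k::{field,finite}) = 2 ^ m" shows "(x::'k) - y = x + y"
  using char2_neg[OF assms, of y] by (metis diff_conv_add_uminus)

lemma frob2:
  assumes "CARD('k::{field,finite}) = 2 ^ m" shows "((x::'k) + y) ^ 2 = x^2 + y^2"
proof -
  have "(x+y)^2 = x^2 + y^2 + (x*y + x*y)" by (simp add: power2_eq_square algebra_simps)
  thus ?thesis using char2_add_self[OF assms] by simp
qed

lemma frob:
  assumes "CARD('k::{field,finite}) = 2 ^ m" shows "((x::'k) + y) ^ (2^i) = x^(2^i) + y^(2^i)"
proof (induction i)
  case (Suc i)
  have "(x+y)^(2^Suc i) = ((x+y)^(2^i))^2" by (simp add: power_mult[symmetric] mult.commute)
  also have "\<dots> = (x^(2^i))^2 + (y^(2^i))^2" using Suc frob2[OF assms] by simp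
  also have "\<dots> = x^(2^Suc i) + y^(2^Suc i)" by (simp add: power_mult[symmetric] mult.commute)
  finally show ?case .
qed simp

lemma frob_sum:
  assumes "CARD('k::{field,finite}) = 2 ^ m" shows "(\<Sum>i\<in>A. f i :: 'k) ^ 2 = (\<Sum>i\<in>A. (f i)^2)"
  by (induction A rule: infinite_finite_induct) (auto simp: frob2[OF assms])

lemma pow_2m:
  assumes "CARD('k::{field,finite}) = 2 ^ m" shows "(x::'k) ^ (2^m) = x"
  using pow_card_same[of x] assms by simp

lemma tr_add:
  assumes "CARD('k::{field,finite}) = 2 ^ m" shows "tr k ((x::'k) + y) = tr k x + tr k y"
  unfolding tr_def by (simp add: frob[OF assms] sum.distrib)

lemma tr_zero: "tr k 0 = 0"
  unfolding tr_def by (simp add: zero_power)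

lemma tr_sum:
  assumes "CARD('k::{field,finite}) = 2 ^ m" shows "tr k (\<Sum>i\<in>A. f i :: 'k) = (\<Sum>i\<in>A. tr k (f i))"
  by (induction A rule: infinite_finite_induct) (auto simp: tr_add[OF assms] tr_zero)

lemma idem_pow:
  assumes "(c::'k::field)^2 = c" shows "c^(2^i) = c"
proof (induction i)
  case (Suc i)
  have "c^(2^Suc i) = (c^(2^i))^2" by (simp add: power_mult[symmetric] mult.commute)
  thus ?case using Suc assms by simp
qed simp

lemma tr_scal:
  assumes "(c::'k::field)^2 = c" shows "tr k (c * x) = c * tr k x"
  unfolding tr_def by (simp add: power_mult_distrib idem_pow[OF assms] sum_distrib_left)

lemma tr_sq_gen:
  assumes "CARD('k::{field,finite}) = 2 ^ m" and "(w::'k)^(2^k) = w"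
  shows "tr k (w^2) = tr k w"
proof -
  have "tr k (w^2) = (\<Sum>i<k. w^(2^Suc i))"
    unfolding tr_def by (simp add: power_mult[symmetric] mult.commute)
  moreover have "(\<Sum>i<Suc k. w^(2^i)) = w + (\<Sum>i<k. w^(2^Suc i))"
    using sum.lessThan_Suc_shift[of "\<lambda>i. w^(2^i)" k] by simp
  moreover have "(\<Sum>i<Suc k. w^(2^i)) = tr k w + w^(2^k)" by (simp add: tr_def)
  ultimately show ?thesis using assms(2) by (metis add.commute add_left_cancel)
qed

lemma tr_idem_gen:
  assumes "CARD('k::{field,finite}) = 2 ^ m" and "(w::'k)^(2^k) = w"
  shows "(tr k w)^2 = tr k w"
proof -
  have "(tr k w)^2 = (\<Sum>i<k. (w^(2^i))^2)" unfolding tr_def by (rule frob_sum[OF assms(1)])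
  also have "\<dots> = tr k (w^2)" unfolding tr_def by (simp add: power_mult[symmetric] mult.commute)
  finally show ?thesis using tr_sq_gen[OF assms] by simp
qed

lemma tr_sq:
  assumes "CARD('k::{field,finite}) = 2 ^ m" shows "tr m ((w::'k)^2) = tr m w"
  using tr_sq_gen[OF assms pow_2m[OF assms]] .

lemma tr_pow2:
  assumes "CARD('k::{field,finite}) = 2 ^ m" shows "tr m ((w::'k)^(2^i)) = tr m w"
proof (induction i)
  case (Suc i)
  have "w^(2^Suc i) = (w^(2^i))^2" by (simp add: power_mult[symmetric] mult.commute)
  thus ?case using Suc tr_sq[OF assms] by simp
qed simp

lemma tr_idem:
  assumes "CARD('k::{field,finite}) = 2 ^ m" shows "(tr m (w::'k))^2 = tr m w"
  using tr_idem_gen[OF assms pow_2m[OF assms]] .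

lemma idem_01: "(u::'k::field)^2 = u \<Longrightarrow> u = 0 \<or> u = 1"
  by (metis power2_eq_square mult_cancel_right1 mult_eq_0_iff)



lemma tr_nonzero:
  assumes "CARD('k::{field,finite}) = 2 ^ m" shows "\<exists>x::'k. tr m x \<noteq> 0"
proof (rule ccontr)
  assume H: "\<not> (\<exists>x::'k. tr m x \<noteq> 0)"
  have m: "m > 0" using m_pos[OF assms] .
  define p :: "'k poly" where "p = (\<Sum>i<m. monom 1 (2^i))"
  have poly_p: "poly p x = tr m x" for x
    unfolding p_def tr_def by (simp add: poly_sum poly_monom)
  have "coeff p (2^(m-1)) = (\<Sum>i<m. if i = m - 1 then 1 else 0)"
    unfolding p_def coeff_sum by (intro sum.cong) (auto simp: coeff_monom)
  also have "\<dots> = 1" using m by (simp add: sum.delta)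
  finally have "p \<noteq> 0" by auto
  have deg: "degree p \<le> 2^(m-1)"
    unfolding p_def
  proof (rule degree_sum_le)
    fix i assume "i \<in> {..<m}"
    hence "2^i \<le> (2::nat)^(m-1)" by (intro power_increasing) auto
    thus "degree (monom (1::'k) (2^i)) \<le> 2^(m-1)" by (simp add: degree_monom_eq)
  qed simp
  have "{x. poly p x = 0} = UNIV" using H poly_p by auto
  hence "CARD('k) \<le> degree p" using card_poly_roots_bound[OF \<open>p \<noteq> 0\<close>] by simp
  also have "\<dots> \<le> 2^(m-1)" by (rule deg)
  also have "\<dots> < 2^m" using m by simp
  finally show False using assms by simp
qed

definition mchar :: "('x::ab_group_add \<Rightarrow> complex) \<Rightarrow> bool" where
  "mchar f \<longleftrightarrow> (\<forall>x y. f (x + y) = f x * f y)"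

definition pm1 :: "('x \<Rightarrow> complex) \<Rightarrow> bool" where
  "pm1 f \<longleftrightarrow> (\<forall>x. f x = 1 \<or> f x = -1)"

lemma char_sum_zero:
  fixes \<psi> :: "'x::{ab_group_add,finite} \<Rightarrow> complex"
  assumes "mchar \<psi>" "\<psi> x0 \<noteq> 1"
  shows "(\<Sum>x\<in>UNIV. \<psi> x) = 0"
proof -
  have "(\<Sum>x\<in>UNIV. \<psi> x) = (\<Sum>x\<in>UNIV. \<psi> (x + x0))"
    by (rule sum.reindex_bij_witness[of _ "\<lambda>x. x + x0" "\<lambda>x. x - x0"]) auto
  also have "\<dots> = \<psi> x0 * (\<Sum>x\<in>UNIV. \<psi> x)"
    using assms(1) unfolding mchar_def by (simp add: sum_distrib_left mult.commute)
  finally have "(1 - \<psi> x0) * (\<Sum>x\<in>UNIV. \<psi> x) = 0" by (simp add: algebra_simps)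
  thus ?thesis using assms(2) by simp
qed

lemma pm1_sq: "pm1 f \<Longrightarrow> f x * f x = 1"
  unfolding pm1_def by (metis mult_1 mult_minus1 minus_minus)

lemma mchar_pm1_zero: "mchar f \<Longrightarrow> pm1 f \<Longrightarrow> f 0 = 1"
  unfolding mchar_def pm1_def by (metis add_0 mult_1 mult_minus1 minus_minus)

lemma to_bit_add:
  assumes "CARD('k::{field,finite}) = 2 ^ m" "(u::'k)^2 = u" "v^2 = v"
  shows "to_bit (u + v) = to_bit u + to_bit v"
  using idem_01[OF assms(2)] idem_01[OF assms(3)] char2[OF assms(1)]
  by (auto simp: to_bit_def)

lemma to_bit_mult:
  assumes "(u::'k::field)^2 = u" "v^2 = v"
  shows "to_bit (u * v) = to_bit u * to_bit v"
  using idem_01[OF assms(1)] idem_01[OF assms(2)]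
  by (auto simp: to_bit_def)

lemma bit_cases: "(b::bit) = 0 \<or> b = 1" by (cases b) auto

lemma chi_add: "chi (b + c) = chi b * chi c"
  using bit_cases[of b] bit_cases[of c] by (auto simp: chi_def)

lemma chi_sq: "chi b * chi b = 1"
  using bit_cases[of b] by (auto simp: chi_def)

lemma chi_pm: "chi b = 1 \<or> chi b = -1"
  using bit_cases[of b] by (auto simp: chi_def)

definition eF :: "nat \<Rightarrow> 'k::field \<Rightarrow> complex" where
  "eF m x = chi (to_bit (tr m x))"

lemma eF_add:
  assumes "CARD('k::{field,finite}) = 2 ^ m"
  shows "eF m ((x::'k) + y) = eF m x * eF m y"
  unfolding eF_def tr_add[OF assms] to_bit_add[OF assms tr_idem[OF assms] tr_idem[OF assms]] chi_add ..

lemma eF_mchar: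
  assumes "CARD('k::{field,finite}) = 2 ^ m"
  shows "mchar (\<lambda>x::'k. eF m (c * x))"
  unfolding mchar_def by (simp add: distrib_left eF_add[OF assms])

lemma eF_pm1: "pm1 (\<lambda>x. eF m (f x))"
  unfolding pm1_def eF_def using chi_pm by blast

lemma eF_zero: "eF m 0 = 1"
  by (simp add: eF_def tr_zero to_bit_def chi_def)

lemma sum_eF:
  assumes "CARD('k::{field,finite}) = 2 ^ m"
  shows "(\<Sum>l\<in>UNIV. eF m (l * (x::'k))) = (if x = 0 then of_nat CARD('k) else 0)"
proof (cases "x = 0")
  case True thus ?thesis by (simp add: eF_zero)
next
  case False
  obtain y :: 'k where y: "tr m y \<noteq> 0" using tr_nonzero[OF assms] by blast
  have "eF m ((y / x) * x) \<noteq> 1" using y False by (simp add: eF_def to_bit_def chi_def)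
  moreover have "mchar (\<lambda>l. eF m (l * x))"
    unfolding mchar_def by (simp add: distrib_right eF_add[OF assms])
  ultimately show ?thesis using char_sum_zero[of "\<lambda>l. eF m (l * x)" "y/x"] False by simp
qed

lemma represent:
  fixes \<rho> :: "'k::{field,finite} \<Rightarrow> complex"
  assumes card: "CARD('k) = 2 ^ m" and "mchar \<rho>" "pm1 \<rho>"
  shows "\<exists>l. \<forall>x. \<rho> x = eF m (l * x)"
proof -
  have "(\<Sum>l\<in>UNIV. \<Sum>x\<in>UNIV. \<rho> x * eF m (l * x)) = (\<Sum>x\<in>UNIV. \<rho> x * (\<Sum>l\<in>UNIV. eF m (l * x)))"
    by (subst sum.swap) (simp add: sum_distrib_left)
  also have "\<dots> = (\<Sum>x::'k\<in>UNIV. if x = 0 then \<rho> 0 * of_nat CARD('k) else 0)"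
    by (intro sum.cong refl) (simp add: sum_eF[OF card])
  also have "\<dots> = of_nat CARD('k)"
    using mchar_pm1_zero[OF assms(2,3)] by (simp add: sum.delta)
  finally have "(\<Sum>l\<in>UNIV. \<Sum>x\<in>UNIV. \<rho> x * eF m (l * x)) \<noteq> 0" by simp
  then obtain l where l: "(\<Sum>x\<in>UNIV. \<rho> x * eF m (l * x)) \<noteq> 0"
    by (meson sum.neutral)
  have mc: "mchar (\<lambda>x. \<rho> x * eF m (l * x))"
    using assms(2) eF_mchar[OF card, of l] unfolding mchar_def by (simp add: mult_ac)
  have one: "\<rho> x * eF m (l * x) = 1" for x
    using char_sum_zero[OF mc, of x] l by blast
  show ?thesis
  proof (intro exI allI)
    fix x
    have "eF m (l * x) * eF m (l * x) = 1" using pm1_sq[OF eF_pm1] .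
    thus "\<rho> x = eF m (l * x)" using one[of x] by (metis mult.assoc mult_1 mult.commute)
  qed
qed



lemma pm1_mult: "pm1 f \<Longrightarrow> pm1 g \<Longrightarrow> pm1 (\<lambda>x. f x * g x)"
  unfolding pm1_def by (metis mult_1 mult_minus1 minus_minus mult.commute)

lemma mchar_mult: "mchar f \<Longrightarrow> mchar g \<Longrightarrow> mchar (\<lambda>x. f x * g x)"
  unfolding mchar_def by (simp add: mult_ac)

lemma sum_UNIV_prod:
  fixes g :: "'x::finite \<times> 'y::finite \<Rightarrow> 'c::comm_monoid_add"
  shows "(\<Sum>p\<in>UNIV. g p) = (\<Sum>y\<in>UNIV. \<Sum>x\<in>UNIV. g (x, y))"
proof -
  have "(\<Sum>p\<in>UNIV. g p) = (\<Sum>p\<in>UNIV \<times> UNIV. g p)" by simp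
  also have "\<dots> = (\<Sum>x\<in>UNIV. \<Sum>y\<in>UNIV. g (x, y))" by (rule sum.cartesian_product')
  also have "\<dots> = (\<Sum>y\<in>UNIV. \<Sum>x\<in>UNIV. g (x, y))" by (rule sum.swap)
  finally show ?thesis .
qed

lemma mult_eq_iff_div: "(a::'k::field) \<noteq> 0 \<Longrightarrow> (a * X = b) \<longleftrightarrow> (X = b / a)"
  by (metis nonzero_eq_divide_eq mult.commute)

lemma eF_lin:
  assumes card: "CARD('k::{field,finite}) = 2 ^ m"
  shows "eF m ((c + l) * (x::'k)) = eF m (x * c) * eF m (l * x)"
proof -
  have "(c + l) * x = x * c + l * x" by (simp add: algebra_simps)
  thus ?thesis by (simp add: eF_add[OF card])
qed

lemma MM:
  fixes P H :: "'b::{field,finite} \<Rightarrow> 'b" and \<rho> :: "'b \<times> 'b \<Rightarrow> complex"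
  assumes card: "CARD('b) = 2 ^ t" and bP: "bij P" and a1: "a1 \<noteq> 0" and a3: "a3 \<noteq> 0"
    and mc: "mchar \<rho>" and pm: "pm1 \<rho>"
  shows "(\<Sum>p\<in>UNIV. eF t ((a1 * fst p + a2) * P (a3 * snd p + a4)) * eF t (H (a3 * snd p + a4)) * \<rho> p)
           = of_nat CARD('b) \<or>
         (\<Sum>p\<in>UNIV. eF t ((a1 * fst p + a2) * P (a3 * snd p + a4)) * eF t (H (a3 * snd p + a4)) * \<rho> p)
           = - of_nat CARD('b)"
proof -
  have mc1: "mchar (\<lambda>x. \<rho> (x, 0))" using mc unfolding mchar_def
    by (metis add_0 add_Pair)
  have pm1': "pm1 (\<lambda>x. \<rho> (x, 0))" using pm unfolding pm1_def by blast
  obtain l where l: "\<And>x. \<rho> (x, 0) = eF t (l * x)" using represent[OF card mc1 pm1'] by blast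
  have split: "\<rho> (x, y) = \<rho> (x, 0) * \<rho> (0, y)" for x y
    using mc unfolding mchar_def by (metis add_0 add.right_neutral add_Pair)
  define K where "K y = eF t (a2 * P (a3 * y + a4)) * eF t (H (a3 * y + a4)) * \<rho> (0, y)" for y
  define C where "C y = a1 * P (a3 * y + a4)" for y
  have trm: "eF t ((a1 * x + a2) * P (a3 * y + a4)) * eF t (H (a3 * y + a4)) * \<rho> (x, y)
     = eF t ((C y + l) * x) * K y" for x y
  proof -
    have "(a1 * x + a2) * P (a3 * y + a4) = x * C y + a2 * P (a3 * y + a4)"
      unfolding C_def by (simp add: algebra_simps)
    hence e1: "eF t ((a1 * x + a2) * P (a3 * y + a4)) = eF t (x * C y) * eF t (a2 * P (a3 * y + a4))"
      by (simp only: eF_add[OF card])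
    have e2: "\<rho> (x, y) = eF t (l * x) * \<rho> (0, y)" using split[of x y] l[of x] by simp
    have e3: "eF t ((C y + l) * x) = eF t (x * C y) * eF t (l * x)" by (rule eF_lin[OF card])
    show ?thesis unfolding e1 e2 e3 K_def by (simp add: mult_ac)
  qed
  have "(\<Sum>p\<in>UNIV. eF t ((a1 * fst p + a2) * P (a3 * snd p + a4)) * eF t (H (a3 * snd p + a4)) * \<rho> p)
      = (\<Sum>y\<in>UNIV. \<Sum>x\<in>UNIV. eF t ((C y + l) * x) * K y)"
    unfolding sum_UNIV_prod by (simp add: trm)
  also have "\<dots> = (\<Sum>y\<in>UNIV. (if C y + l = 0 then of_nat CARD('b) else 0) * K y)"
  proof (intro sum.cong refl)
    fix y
    have "(\<Sum>x\<in>UNIV. eF t ((C y + l) * x)) = (\<Sum>x\<in>UNIV. eF t (x * (C y + l)))"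
      by (simp add: mult.commute)
    thus "(\<Sum>x\<in>UNIV. eF t ((C y + l) * x) * K y) = (if C y + l = 0 then of_nat CARD('b) else 0) * K y"
      by (simp add: sum_eF[OF card] sum_distrib_right[symmetric])
  qed
  also obtain y0 where y0: "\<And>y. (C y + l = 0) \<longleftrightarrow> y = y0"
  proof -
    define y0 where "y0 = (inv P (- l / a1) - a4) / a3"
    have "(C y + l = 0) \<longleftrightarrow> y = y0" for y
    proof -
      have "(C y + l = 0) \<longleftrightarrow> C y = - l" using eq_neg_iff_add_eq_0[of "C y" l] by simp
      also have "\<dots> \<longleftrightarrow> P (a3 * y + a4) = - l / a1"
        unfolding C_def by (rule mult_eq_iff_div[OF a1])
      also have "\<dots> \<longleftrightarrow> a3 * y + a4 = inv P (- l / a1)"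
        using bP by (metis bij_inv_eq_iff)
      also have "\<dots> \<longleftrightarrow> a3 * y = inv P (- l / a1) - a4" by (simp add: eq_diff_eq)
      also have "\<dots> \<longleftrightarrow> y = y0" unfolding y0_def by (rule mult_eq_iff_div[OF a3])
      finally show ?thesis .
    qed
    thus ?thesis using that by blast
  qed
  hence "(\<Sum>y\<in>UNIV. (if C y + l = 0 then of_nat CARD('b) else 0) * K y) = of_nat CARD('b) * K y0"
    by (simp add: if_distrib[of "\<lambda>z. z * K _"] cong: if_cong) 
  finally have eq: "(\<Sum>p\<in>UNIV. eF t ((a1 * fst p + a2) * P (a3 * snd p + a4)) * eF t (H (a3 * snd p + a4)) * \<rho> p)
     = of_nat CARD('b) * K y0" .
  have "pm1 K" unfolding K_def
    by (intro pm1_mult eF_pm1) (use pm in \<open>auto simp: pm1_def\<close>)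
  hence "K y0 = 1 \<or> K y0 = -1" unfolding pm1_def by blast
  thus ?thesis unfolding eq by auto
qed



lemma sum_lessThan_add_split:
  "(\<Sum>i<m+(k::nat). f i :: 'c::comm_monoid_add) = (\<Sum>i<m. f i) + (\<Sum>i<k. f (m + i))"
  by (induction k) (simp_all add: add.assoc)

lemma tr_double:
  "tr (2 * t) (w::'k::field) = tr t w + tr t (w ^ (2^t))"
proof -
  have "tr (2*t) w = (\<Sum>i<t+t. w^(2^i))" by (simp add: tr_def mult_2)
  also have "\<dots> = tr t w + (\<Sum>i<t. w^(2^(t+i)))" unfolding sum_lessThan_add_split tr_def ..
  also have "(\<Sum>i<t. w^(2^(t+i))) = tr t (w ^ (2^t))"
    unfolding tr_def by (simp add: power_add power_mult)
  finally show ?thesis .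
qed

lemma reindex_mid:
  fixes f :: "nat \<Rightarrow> 'c::comm_monoid_add"
  assumes "t \<ge> 1"
  shows "(\<Sum>i\<in>{1..t-1}. f i) + (\<Sum>i\<in>{1..t-1}. f (2*t - i)) + f t = (\<Sum>j\<in>{1..2*t-1}. f j)"
proof -
  have r: "(\<Sum>i\<in>{1..t-1}. f (2*t - i)) = (\<Sum>j\<in>{t+1..2*t-1}. f j)"
    by (rule sum.reindex_bij_witness[of _ "\<lambda>j. 2*t - j" "\<lambda>i. 2*t - i"]) auto
  have s: "{1..2*t-1} = {1..t-1} \<union> ({t} \<union> {t+1..2*t-1})" using assms by auto
  have e1: "(\<Sum>j\<in>{1..2*t-1}. f j) = (\<Sum>j\<in>{1..t-1}. f j) + (\<Sum>j\<in>{t} \<union> {t+1..2*t-1}. f j)"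
    unfolding s by (rule sum.union_disjoint) auto
  have e2: "(\<Sum>j\<in>{t} \<union> {t+1..2*t-1}. f j) = f t + (\<Sum>j\<in>{t+1..2*t-1}. f j)"
    by (subst sum.union_disjoint) auto
  show ?thesis unfolding e1 e2 r by (simp only: add.assoc add.commute add.left_commute)
qed

lemma tr_split0:
  assumes "n \<ge> 1"
  shows "(\<Sum>j\<in>{1..n-1}. (x::'k::field) ^ (2^j)) = tr n x - x"
proof -
  have "{..<n} = insert 0 {1..n-1}" using assms by auto
  hence "tr n x = x + (\<Sum>j\<in>{1..n-1}. x ^ (2^j))" unfolding tr_def by simp
  thus ?thesis by simp
qed



context
  fixes n :: nat and a :: "nat \<Rightarrow> 'a::{field,finite}"
  assumes card: "CARD('a) = 2 ^ n" and sdb: "self_dual_basis n a"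
begin

lemma sdb': "i < n \<Longrightarrow> j < n \<Longrightarrow> tr n (a i * a j) = (if i = j then 1 else 0)"
  using sdb unfolding self_dual_basis_def by blast

lemma sd_expand: "z = (\<Sum>k<n. tr n (a k * z) * a k)"
proof -
  define f where "f S = (\<Sum>k\<in>S. a k)" for S
  have trf: "tr n (a j * f S) = (if j \<in> S then 1 else 0)" if "S \<subseteq> {..<n}" "j < n" for S j
  proof -
    have fin: "finite S" using that finite_subset by blast
    have "tr n (a j * f S) = (\<Sum>k\<in>S. tr n (a j * a k))"
      unfolding f_def sum_distrib_left tr_sum[OF card] ..
    also have "\<dots> = (\<Sum>k\<in>S. if j = k then 1 else 0)"
      using that by (intro sum.cong refl) (auto simp: sdb')
    also have "\<dots> = (if j \<in> S then 1 else 0)" using fin by simp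
    finally show ?thesis .
  qed
  have inj: "inj_on f (Pow {..<n})"
  proof (rule inj_onI)
    fix S T assume S: "S \<in> Pow {..<n}" and T: "T \<in> Pow {..<n}" and eq: "f S = f T"
    have "j \<in> S \<longleftrightarrow> j \<in> T" if "j < n" for j
      using trf[of S j] trf[of T j] S T that eq by (auto split: if_splits)
    thus "S = T" using S T by blast
  qed
  have "card (f ` Pow {..<n}) = 2 ^ n" using card_image[OF inj] by (simp add: card_Pow)
  hence "f ` Pow {..<n} = UNIV" using card by (intro card_subset_eq) auto
  hence "z \<in> f ` Pow {..<n}" by simp
  then obtain S where S: "S \<subseteq> {..<n}" and z: "z = f S" by blast
  have "(\<Sum>k<n. tr n (a k * z) * a k) = (\<Sum>k<n. if k \<in> S then a k else 0)"
    unfolding z by (intro sum.cong refl) (simp add: trf[OF S])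
  also have "\<dots> = (\<Sum>k\<in>{..<n} \<inter> S. a k)" by (rule sum.inter_restrict[symmetric]) simp
  also have "{..<n} \<inter> S = S" using S by blast
  finally show ?thesis unfolding z f_def by simp
qed

lemma tr_mult_expand: "tr n (x * y) = (\<Sum>k<n. tr n (a k * x) * tr n (a k * y))"
proof -
  have "x * y = (\<Sum>k<n. tr n (a k * y) * (a k * x))"
    by (subst sd_expand[of y]) (simp add: sum_distrib_left mult_ac)
  hence "tr n (x * y) = (\<Sum>k<n. tr n (tr n (a k * y) * (a k * x)))" by (simp add: tr_sum[OF card])
  also have "\<dots> = (\<Sum>k<n. tr n (a k * x) * tr n (a k * y))"
    by (intro sum.cong refl) (subst tr_scal[OF tr_idem[OF card]], simp add: mult.commute)
  finally show ?thesis .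
qed

lemma tr_a: "k < n \<Longrightarrow> tr n (a k) = 1"
  using tr_sq[OF card, of "a k"] sdb'[of k k] by (simp add: power2_eq_square)

definition Sset :: "'a \<Rightarrow> nat set" where
  "Sset z = {i. i < n \<and> tr n (a i * z) \<noteq> 0}"

lemma wt_Sset: "wt n a z = card (Sset z)"
  unfolding wt_def Sset_def ..

lemma tr_01: "tr n (w::'a) = 0 \<or> tr n w = 1"
  using idem_01[OF tr_idem[OF card]] .

lemma Sset_add: "Sset (x + y) = (Sset x - Sset y) \<union> (Sset y - Sset x)"
proof -
  have "tr n (a i * (x + y)) \<noteq> 0 \<longleftrightarrow> (tr n (a i * x) \<noteq> 0) \<noteq> (tr n (a i * y) \<noteq> 0)" for i
    using tr_01[of "a i * x"] tr_01[of "a i * y"] char2[OF card]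
    by (auto simp: distrib_left tr_add[OF card])
  thus ?thesis unfolding Sset_def by auto
qed

lemma card_Sset_add: "card (Sset x) + card (Sset y) = card (Sset (x + y)) + 2 * card (Sset x \<inter> Sset y)"
proof -
  have fin: "finite (Sset z)" for z unfolding Sset_def by auto
  have 1: "card (Sset x) = card (Sset x - Sset y) + card (Sset x \<inter> Sset y)"
    using card_Int_Diff[OF fin, of x "Sset y"] by simp
  have 2: "card (Sset y) = card (Sset y - Sset x) + card (Sset x \<inter> Sset y)"
    using card_Int_Diff[OF fin, of y "Sset x"] by (simp add: Int_commute)
  have 3: "card (Sset (x + y)) = card (Sset x - Sset y) + card (Sset y - Sset x)"
    unfolding Sset_add using fin by (intro card_Un_disjoint) auto
  show ?thesis using 1 2 3 by simp
qed

lemma of_nat_char2: "(of_nat d :: 'a) = (if even d then 0 else 1)"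
proof -
  have two: "(2::'a) = 0" by (metis char2[OF card] one_add_one)
  show ?thesis by (induction d) (auto simp: two)
qed

lemma chi_of_nat: "chi (to_bit (of_nat d :: 'a)) = (-1) ^ d"
  by (simp add: of_nat_char2 to_bit_def chi_def)

lemma tr_mult_card: "tr n (x * y) = of_nat (card (Sset x \<inter> Sset y))"
proof -
  have "tr n (x * y) = (\<Sum>k<n. tr n (a k * x) * tr n (a k * y))" by (rule tr_mult_expand)
  also have "\<dots> = (\<Sum>k<n. if k \<in> Sset x \<inter> Sset y then 1 else 0)"
  proof (intro sum.cong refl)
    fix k assume k: "k \<in> {..<n}"
    show "tr n (a k * x) * tr n (a k * y) = (if k \<in> Sset x \<inter> Sset y then 1 else 0)"
      using tr_01[of "a k * x"] tr_01[of "a k * y"] k by (auto simp: Sset_def)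
  qed
  also have "\<dots> = (\<Sum>k\<in>{..<n} \<inter> (Sset x \<inter> Sset y). 1)" by (rule sum.inter_restrict[symmetric]) simp
  also have "{..<n} \<inter> (Sset x \<inter> Sset y) = Sset x \<inter> Sset y" unfolding Sset_def by auto
  finally show ?thesis by simp
qed

lemma om_add:
  "\<i> ^ wt n a (x + y) = \<i> ^ wt n a x * \<i> ^ wt n a y * chi (to_bit (tr n (x * y)))"
proof -
  define c where "c = card (Sset x \<inter> Sset y)"
  have "\<i> ^ wt n a x * \<i> ^ wt n a y = \<i> ^ (wt n a (x + y) + 2 * c)"
    unfolding wt_Sset c_def card_Sset_add[symmetric] by (simp add: power_add)
  also have "\<dots> = \<i> ^ wt n a (x + y) * (-1) ^ c" by (simp add: power_add power_mult)
  finally have e: "\<i> ^ wt n a x * \<i> ^ wt n a y = \<i> ^ wt n a (x + y) * (-1) ^ c" .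
  have ch: "chi (to_bit (tr n (x * y))) = (-1) ^ c" unfolding tr_mult_card c_def chi_of_nat ..
  have sq: "((-1::complex) ^ c) * (-1) ^ c = 1" by (simp add: power_mult_distrib[symmetric])
  have "\<i> ^ wt n a (x + y) = \<i> ^ wt n a (x + y) * (((-1) ^ c) * (-1) ^ c)" unfolding sq by simp
  also have "\<dots> = (\<i> ^ wt n a (x + y) * (-1) ^ c) * (-1) ^ c" by (simp only: mult.assoc)
  also have "\<dots> = \<i> ^ wt n a x * \<i> ^ wt n a y * chi (to_bit (tr n (x * y)))" unfolding e[symmetric] ch ..
  finally show ?thesis .
qed

end



lemma idem_add:
  assumes "CARD('k::{field,finite}) = 2 ^ m" "(u::'k)^2 = u" "v^2 = v"
  shows "(u + v)^2 = u + v"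
  using frob2[OF assms(1)] assms(2,3) by simp

lemma idem_mult: "(u::'k::field)^2 = u \<Longrightarrow> v^2 = v \<Longrightarrow> (u * v)^2 = u * v"
  by (simp add: power_mult_distrib)

lemma idem_sum:
  assumes "CARD('k::{field,finite}) = 2 ^ m" "\<And>i. i \<in> A \<Longrightarrow> (f i :: 'k)^2 = f i"
  shows "(\<Sum>i\<in>A. f i)^2 = (\<Sum>i\<in>A. f i)"
  unfolding frob_sum[OF assms(1)] using assms(2) by simp

lemma tr_diff:
  assumes "CARD('k::{field,finite}) = 2 ^ m" shows "tr k ((x::'k) - y) = tr k x - tr k y"
  using tr_add[OF assms, where x="x - y" and y=y and k=k] by simp

context
  fixes n t :: nat and a :: "nat \<Rightarrow> 'a::{field,finite}"
  assumes card: "CARD('a) = 2 ^ n" and sdb: "self_dual_basis n a" and nt: "n = 2 * t"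
begin

definition Qf :: "'a \<Rightarrow> 'a" where
  "Qf z = (\<Sum>i\<in>{1..t-1}. tr n (z ^ (2 ^ i + 1))) + tr t (z ^ (2 ^ t + 1))"

lemma t_pos: "t \<ge> 1" using m_pos[OF card] nt by simp

lemma pow_plus1:
  "((x::'a) + y) ^ (2^i + 1) = x^(2^i+1) + y^(2^i+1) + (x^(2^i) * y + x * y^(2^i))"
  by (simp add: power_add frob[OF card] algebra_simps)

lemma tr_shift:
  assumes "i \<le> n" shows "tr n ((x::'a) * y ^ (2^i)) = tr n (x ^ (2^(n-i)) * y)"
proof -
  have "(x ^ (2^(n-i)) * y) ^ (2^i) = x ^ (2^(n-i) * 2^i) * y ^ (2^i)"
    by (simp add: power_mult_distrib power_mult)
  also have "2^(n-i) * 2^i = (2::nat)^n" using assms by (simp flip: power_add)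
  also have "x ^ (2^n) = x" by (rule pow_2m[OF card])
  finally show ?thesis using tr_pow2[OF card, of "x ^ (2^(n-i)) * y" i] by simp
qed

lemma tr_t_pair: "tr t ((x::'a)^(2^t) * y) + tr t (x * y^(2^t)) = tr n (x^(2^t) * y)"
proof -
  have "(x^(2^t) * y) ^ (2^t) = x ^ (2^t * 2^t) * y^(2^t)" by (simp add: power_mult_distrib power_mult)
  also have "2^t * 2^t = (2::nat)^n" using nt by (simp flip: power_add add: mult_2)
  also have "x ^ (2^n) = x" by (rule pow_2m[OF card])
  finally show ?thesis using tr_double[of t "x^(2^t) * y"] nt by simp
qed

lemma Qf_zero: "Qf 0 = 0"
  unfolding Qf_def by (simp add: tr_zero)

lemma Qf_idem: "(Qf z)^2 = Qf z"
proof -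
  have w: "(z ^ (2^t+1)) ^ (2^t) = z ^ (2^t+1)"
  proof -
    have "(z ^ (2^t+1)) ^ (2^t) = z ^ (2^t * 2^t) * z ^ (2^t)" by (simp add: power_mult[symmetric] power_add algebra_simps)
    also have "2^t * 2^t = (2::nat)^n" using nt by (simp flip: power_add add: mult_2)
    finally show ?thesis using pow_2m[OF card, of z] by (simp add: power_add mult.commute)
  qed
  show ?thesis unfolding Qf_def
    by (intro idem_add[OF card] idem_sum[OF card] tr_idem[OF card] tr_idem_gen[OF card w])
qed

lemma Qf_polar: "Qf (x + y) = Qf x + Qf y + tr n x * tr n y + tr n (x * y)"
proof -
  define S where "S f = (\<Sum>i\<in>{1..t-1}. f i)" for f :: "nat \<Rightarrow> 'a"
  have A: "(\<Sum>i\<in>{1..t-1}. tr n ((x+y) ^ (2^i+1))) =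
      S (\<lambda>i. tr n (x^(2^i+1))) + S (\<lambda>i. tr n (y^(2^i+1)))
      + (S (\<lambda>i. tr n (x^(2^i) * y)) + S (\<lambda>i. tr n (x^(2^(2*t-i)) * y)))"
  proof -
    have "(\<Sum>i\<in>{1..t-1}. tr n ((x+y) ^ (2^i+1))) = (\<Sum>i\<in>{1..t-1}.
        tr n (x^(2^i+1)) + tr n (y^(2^i+1)) + (tr n (x^(2^i) * y) + tr n (x^(2^(2*t-i)) * y)))"
    proof (intro sum.cong refl)
      fix i assume i: "i \<in> {1..t-1}"
      hence "i \<le> n" using nt by auto
      thus "tr n ((x+y) ^ (2^i+1)) = tr n (x^(2^i+1)) + tr n (y^(2^i+1)) + (tr n (x^(2^i) * y) + tr n (x^(2^(2*t-i)) * y))"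
        unfolding pow_plus1 tr_add[OF card] using tr_shift[of i x y] nt by simp
    qed
    thus ?thesis unfolding S_def by (simp add: sum.distrib)
  qed
  have B: "tr t ((x+y) ^ (2^t+1)) = tr t (x^(2^t+1)) + tr t (y^(2^t+1)) + tr n (x^(2^t) * y)"
    unfolding pow_plus1 tr_add[OF card] tr_t_pair[symmetric] by (simp add: add.assoc)
  have C: "S (\<lambda>i. tr n (x^(2^i) * y)) + S (\<lambda>i. tr n (x^(2^(2*t-i)) * y)) + tr n (x^(2^t) * y)
      = (\<Sum>j\<in>{1..n-1}. tr n (x^(2^j) * y))"
    unfolding S_def nt by (rule reindex_mid[OF t_pos])
  have D: "(\<Sum>j\<in>{1..n-1}. tr n (x^(2^j) * y)) = tr n x * tr n y + tr n (x * y)"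
  proof -
    have "(\<Sum>j\<in>{1..n-1}. tr n (x^(2^j) * y)) = tr n ((\<Sum>j\<in>{1..n-1}. x^(2^j)) * y)"
      by (simp add: tr_sum[OF card] sum_distrib_right)
    also have "\<dots> = tr n ((tr n x - x) * y)" using t_pos nt by (subst tr_split0) auto
    also have "\<dots> = tr n x * tr n y - tr n (x * y)"
      by (simp add: left_diff_distrib tr_diff[OF card] tr_scal[OF tr_idem[OF card]])
    finally show ?thesis by (simp add: char2_minus[OF card])
  qed
  show ?thesis unfolding Qf_def A B
    using C D unfolding S_def by (simp add: add_ac)
qed

definition qf :: "'a \<Rightarrow> complex" where "qf z = chi (to_bit (Qf z))"

lemma trn_idem: "(tr n (w::'a))^2 = tr n w" by (rule tr_idem[OF card])

lemma qf_add:
  "qf (x + y) = qf x * qf y * chi (to_bit (tr n x * tr n y)) * chi (to_bit (tr n (x * y)))"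
proof -
  have i1: "(Qf x + Qf y)^2 = Qf x + Qf y" by (intro idem_add[OF card] Qf_idem)
  have i2: "(tr n x * tr n y)^2 = tr n x * tr n y" by (intro idem_mult trn_idem)
  have i3: "(Qf x + Qf y + tr n x * tr n y)^2 = Qf x + Qf y + tr n x * tr n y"
    by (intro idem_add[OF card] i1 i2)
  show ?thesis unfolding qf_def Qf_polar
    by (simp only: to_bit_add[OF card i3 trn_idem] to_bit_add[OF card i1 i2]
        to_bit_add[OF card Qf_idem Qf_idem] chi_add)
qed

lemma qf_zero: "qf 0 = 1" by (simp add: qf_def Qf_zero to_bit_def chi_def)

lemma qf_sq: "qf z * qf z = 1" unfolding qf_def by (rule chi_sq)

definition ib :: "'a \<Rightarrow> complex" where "ib z = (if tr n z = 0 then 1 else \<i>)"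
definition cib :: "'a \<Rightarrow> complex" where "cib z = (if tr n z = 0 then 1 else - \<i>)"

lemma ib_cib: "ib z * cib z = 1" by (simp add: ib_def cib_def)

lemma cib_add: "cib (x + y) = cib x * cib y * chi (to_bit (tr n x * tr n y))"
  using tr_01[OF card sdb, of x] tr_01[OF card sdb, of y] char2[OF card]
  by (auto simp: cib_def tr_add[OF card] to_bit_def chi_def)

lemma ib_eF: "ib z = ((1 + \<i>) + (1 - \<i>) * eF n z) / 2"
  using tr_01[OF card sdb, of z] by (auto simp: ib_def eF_def to_bit_def chi_def field_simps)

definition ph :: "'a \<Rightarrow> complex" where "ph z = \<i> ^ wt n a z * qf z * cib z"

lemma ph_mchar: "mchar ph"
  unfolding mchar_def
proof (intro allI)
  fix x y
  have "ph (x + y) = (\<i> ^ wt n a x * \<i> ^ wt n a y * chi (to_bit (tr n (x * y))))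
       * (qf x * qf y * chi (to_bit (tr n x * tr n y)) * chi (to_bit (tr n (x * y))))
       * (cib x * cib y * chi (to_bit (tr n x * tr n y)))"
    unfolding ph_def om_add[OF card sdb] qf_add cib_add ..
  also have "\<dots> = ph x * ph y * (chi (to_bit (tr n (x * y))) * chi (to_bit (tr n (x * y))))
        * (chi (to_bit (tr n x * tr n y)) * chi (to_bit (tr n x * tr n y)))"
    unfolding ph_def by (simp add: mult_ac)
  also have "\<dots> = ph x * ph y" by (simp add: chi_sq)
  finally show "ph (x + y) = ph x * ph y" .
qed

lemma ph_zero: "ph 0 = 1"
proof -
  have "wt n a 0 = 0" unfolding wt_def by (simp add: tr_zero)
  thus ?thesis by (simp add: ph_def qf_zero cib_def tr_zero)
qed

lemma ph_pm1: "pm1 ph"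
  unfolding pm1_def
proof
  fix x
  have "ph x * ph x = 1" using ph_mchar ph_zero char2_add_self[OF card, of x]
    unfolding mchar_def by metis
  thus "ph x = 1 \<or> ph x = -1" by (metis power2_eq_square power2_eq_1_iff)
qed

lemma om_decomp: "\<i> ^ wt n a z = qf z * ph z * ib z"
proof -
  have "qf z * ph z * ib z = \<i> ^ wt n a z * (qf z * qf z) * (ib z * cib z)"
    unfolding ph_def by (simp add: mult_ac)
  thus ?thesis by (simp add: qf_sq ib_cib)
qed

lemma tr_a1: "k < n \<Longrightarrow> tr n (a k) = 1"
  by (rule tr_a[OF card sdb])

lemma qf_not_char: "\<not> (\<forall>x y. qf (x + y) = qf x * qf y)"
proof
  assume H: "\<forall>x y. qf (x + y) = qf x * qf y"
  have n2: "1 < n" using t_pos nt by simp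
  have "qf (a 0 + a 1) = qf (a 0) * qf (a 1) * chi (to_bit ((1::'a) * 1)) * chi (to_bit (0::'a))"
    unfolding qf_add using tr_a1[of 0] tr_a1[of 1] n2 sdb'[OF card sdb, of 0 1] by simp
  hence "qf (a 0) * qf (a 1) = - (qf (a 0) * qf (a 1))" using H by (simp add: to_bit_def chi_def)
  moreover have "qf (a 0) * qf (a 1) \<noteq> 0" using qf_sq by (metis mult_zero_left zero_neq_one mult_eq_0_iff)
  ultimately show False by simp
qed

end



lemma eF_sq: "eF m w * eF m w = 1" by (simp add: eF_def chi_sq)

lemma mchar_fst:
  assumes "CARD('b::{field,finite}) = 2 ^ t"
  shows "mchar (\<lambda>p::'b \<times> 'b. eF t (c * fst p))"
  unfolding mchar_def by (simp add: distrib_left eF_add[OF assms])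

lemma mchar_snd:
  assumes "CARD('b::{field,finite}) = 2 ^ t"
  shows "mchar (\<lambda>p::'b \<times> 'b. eF t (c * snd p))"
  unfolding mchar_def by (simp add: distrib_left eF_add[OF assms])

lemma cmod4:
  fixes S1 S2 :: complex and C :: real
  assumes "S1 = of_real C \<or> S1 = - of_real C" "S2 = of_real C \<or> S2 = - of_real C" "C \<ge> 0"
  shows "cmod ((1 + \<i>) / 2 * S1 + (1 - \<i>) / 2 * S2) = C"
proof -
  have a: "(1 + \<i>) / 2 * of_real C + (1 - \<i>) / 2 * of_real C = of_real C"
    by (simp add: field_simps)
  have b: "(1 + \<i>) / 2 * of_real C + (1 - \<i>) / 2 * - of_real C = \<i> * of_real C"
    by (simp add: field_simps)
  have c: "(1 + \<i>) / 2 * - of_real C + (1 - \<i>) / 2 * of_real C = - \<i> * of_real C"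
    by (simp add: field_simps)
  have d: "(1 + \<i>) / 2 * - of_real C + (1 - \<i>) / 2 * - of_real C = - of_real C"
    by (simp add: field_simps)
  show ?thesis using assms
    by (elim disjE) (simp_all only: a b c d, simp_all add: norm_mult)
qed


theorem theorem8:
  fixes t n :: nat
    and \<phi> :: "'b::{field,finite} \<times> 'b \<Rightarrow> 'a::{field,finite}"
    and a :: "nat \<Rightarrow> 'a"
    and \<alpha>1 \<alpha>2 \<alpha>3 \<alpha>4 \<beta> \<gamma> :: 'b
    and c :: bit
    and \<pi> h :: "'b poly"
  assumes n_def: "n = 2 * t"
    and card_b: "CARD('b) = 2 ^ t"
    and card_a: "CARD('a) = 2 ^ n"
    and sdb: "self_dual_basis n a"
    and phi_bij: "bij \<phi>"
    and phi_add: "\<And>u v. \<phi> (u + v) = \<phi> u + \<phi> v"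
    and decomp: "\<And>x y.
        to_bit ((\<Sum>i\<in>{1..t-1}. tr n ((\<phi> (x, y)) ^ (2 ^ i + 1)))
                + tr t ((\<phi> (x, y)) ^ (2 ^ t + 1)))
        = to_bit (tr t ((\<alpha>1 * x + \<alpha>2) * (\<alpha>3 * y + \<alpha>4)))
          + to_bit (tr t (\<beta> * x)) + to_bit (tr t (\<gamma> * y)) + c"
    and cm: "complete_mapping \<pi>"
  shows "bent_negabent n a
           ((\<lambda>(x, y).
               to_bit (tr t ((\<alpha>1 * x + \<alpha>2) * poly \<pi> (\<alpha>3 * y + \<alpha>4)))
             + to_bit (tr t (poly h (\<alpha>3 * y + \<alpha>4)))
             + to_bit (tr t ((\<alpha>1 * x + \<alpha>2) * (\<alpha>3 * y + \<alpha>4)))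
             + to_bit (tr t (\<beta> * x)) + to_bit (tr t (\<gamma> * y)) + c) \<circ> inv \<phi>)"
proof -
  note ctx = card_a sdb n_def
  define Fb where "Fb p =
               to_bit (tr t ((\<alpha>1 * fst p + \<alpha>2) * poly \<pi> (\<alpha>3 * snd p + \<alpha>4)))
             + to_bit (tr t (poly h (\<alpha>3 * snd p + \<alpha>4)))
             + to_bit (tr t ((\<alpha>1 * fst p + \<alpha>2) * (\<alpha>3 * snd p + \<alpha>4)))
             + to_bit (tr t (\<beta> * fst p)) + to_bit (tr t (\<gamma> * snd p)) + c" for p :: "'b \<times> 'b"
  have inj\<phi>: "inj \<phi>" using phi_bij by (rule bij_is_inj)
  have surj\<phi>: "surj \<phi>" using phi_bij by (rule bij_is_surj)
  have phi0: "\<phi> 0 = 0" using phi_add[of 0 0] by (metis add.right_neutral add_left_cancel)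
  have sum\<phi>: "(\<Sum>z\<in>UNIV. F z) = (\<Sum>p\<in>UNIV. F (\<phi> p))" for F :: "'a \<Rightarrow> complex"
    by (rule sum.reindex_bij_betw[symmetric]) (use phi_bij in \<open>simp add: bij_def bij_betw_def\<close>)
  have chiFb: "chi (Fb p) = eF t ((\<alpha>1 * fst p + \<alpha>2) * poly \<pi> (\<alpha>3 * snd p + \<alpha>4))
      * eF t (poly h (\<alpha>3 * snd p + \<alpha>4)) * eF t ((\<alpha>1 * fst p + \<alpha>2) * (\<alpha>3 * snd p + \<alpha>4))
      * eF t (\<beta> * fst p) * eF t (\<gamma> * snd p) * chi c" for p
    unfolding Fb_def chi_add eF_def ..
  have qf\<phi>: "qf n t (\<phi> p) = eF t ((\<alpha>1 * fst p + \<alpha>2) * (\<alpha>3 * snd p + \<alpha>4))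
      * eF t (\<beta> * fst p) * eF t (\<gamma> * snd p) * chi c" for p
  proof -
    obtain x y where p: "p = (x, y)" by (cases p)
    show ?thesis unfolding qf_def[OF ctx] Qf_def[OF ctx] p fst_conv snd_conv decomp chi_add eF_def ..
  qed
  have nz: "\<alpha>1 \<noteq> 0 \<and> \<alpha>3 \<noteq> 0"
  proof (rule ccontr)
    assume H: "\<not> (\<alpha>1 \<noteq> 0 \<and> \<alpha>3 \<noteq> 0)"
    obtain K M where KM: "\<And>p. qf n t (\<phi> p) = K * M p" and MM': "mchar M"
    proof (cases "\<alpha>1 = 0")
      case True
      have e: "qf n t (\<phi> p) = (eF t (\<alpha>2 * \<alpha>4) * chi c) *
          (eF t (\<beta> * fst p) * eF t (\<gamma> * snd p) * eF t ((\<alpha>2 * \<alpha>3) * snd p))" for p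
      proof -
        have "(\<alpha>1 * fst p + \<alpha>2) * (\<alpha>3 * snd p + \<alpha>4) = (\<alpha>2 * \<alpha>3) * snd p + \<alpha>2 * \<alpha>4"
          using True by (simp add: algebra_simps)
        thus ?thesis unfolding qf\<phi> by (simp add: eF_add[OF card_b] mult_ac)
      qed
      moreover have m: "mchar (\<lambda>p. eF t (\<beta> * fst p) * eF t (\<gamma> * snd p) * eF t ((\<alpha>2 * \<alpha>3) * snd p))"
        by (intro mchar_mult mchar_fst[OF card_b] mchar_snd[OF card_b])
      show ?thesis by (rule that[OF e m])
    next
      case False
      hence a3: "\<alpha>3 = 0" using H by blast
      have e: "qf n t (\<phi> p) = (eF t (\<alpha>2 * \<alpha>4) * chi c) *
          (eF t (\<beta> * fst p) * eF t (\<gamma> * snd p) * eF t ((\<alpha>1 * \<alpha>4) * fst p))" for p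
      proof -
        have "(\<alpha>1 * fst p + \<alpha>2) * (\<alpha>3 * snd p + \<alpha>4) = (\<alpha>1 * \<alpha>4) * fst p + \<alpha>2 * \<alpha>4"
          using a3 by (simp add: algebra_simps)
        thus ?thesis unfolding qf\<phi> by (simp add: eF_add[OF card_b] mult_ac)
      qed
      moreover have m: "mchar (\<lambda>p. eF t (\<beta> * fst p) * eF t (\<gamma> * snd p) * eF t ((\<alpha>1 * \<alpha>4) * fst p))"
        by (intro mchar_mult mchar_fst[OF card_b] mchar_snd[OF card_b])
      show ?thesis by (rule that[OF e m])
    qed
    have "K * M 0 = 1" using KM[of 0] phi0 qf_zero[OF ctx] by simp
    moreover have "M 0 = M 0 * M 0" using MM' unfolding mchar_def by (metis add_0)
    ultimately have M0: "M 0 = 1" by (metis mult_cancel_left1 mult_zero_right zero_neq_one mult.commute)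
    hence K1: "K = 1" using \<open>K * M 0 = 1\<close> by simp
    have "\<forall>x y::'a. qf n t (x + y) = qf n t x * qf n t y"
    proof (intro allI)
      fix x y :: 'a
      obtain p where p: "x = \<phi> p" using surj\<phi> by (metis surjD)
      obtain p' where p': "y = \<phi> p'" using surj\<phi> by (metis surjD)
      have "qf n t (x + y) = qf n t (\<phi> (p + p'))" using p p' phi_add by simp
      also have "\<dots> = M (p + p')" using KM K1 by simp
      also have "\<dots> = M p * M p'" using MM' unfolding mchar_def by blast
      also have "\<dots> = qf n t x * qf n t y" using p p' KM K1 by simp
      finally show "qf n t (x + y) = qf n t x * qf n t y" .
    qed
    thus False using qf_not_char[OF ctx] by blast
  qed
  have a1: "\<alpha>1 \<noteq> 0" and a3: "\<alpha>3 \<noteq> 0" using nz by auto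
  have bij\<pi>: "bij (poly \<pi>)" and bijP: "bij (\<lambda>y. poly \<pi> y + y)"
    using cm unfolding complete_mapping_def by auto
  have mcA: "mchar (\<lambda>p. eF n (\<mu> * \<phi> p))" for \<mu>
    unfolding mchar_def by (simp add: phi_add distrib_left eF_add[OF card_a])
  have C2: "real CARD('b) = 2 ^ t" using card_b by simp
  have pw: "2 powr (real n / 2) = 2 ^ t" using n_def by (simp add: powr_realpow)
  have main: "bent_negabent n a G" if G: "\<And>p. G (\<phi> p) = Fb p" for G
  proof -
    have bent: "bent n G"
      unfolding bent_def
    proof
      fix \<mu> :: 'a
      define \<rho> where "\<rho> p = eF t (\<beta> * fst p) * eF t (\<gamma> * snd p) * eF n (\<mu> * \<phi> p)" for p
      have mc: "mchar \<rho>" unfolding \<rho>_def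
        by (intro mchar_mult mchar_fst[OF card_b] mchar_snd[OF card_b] mcA)
      have pm: "pm1 \<rho>" unfolding \<rho>_def by (intro pm1_mult eF_pm1)
      have "(\<Sum>x\<in>UNIV. chi (G x + to_bit (tr n (\<mu> * x))))
          = (\<Sum>p\<in>UNIV. chi (Fb p) * eF n (\<mu> * \<phi> p))"
        unfolding sum\<phi> G chi_add eF_def ..
      also have "\<dots> = chi c * (\<Sum>p\<in>UNIV. eF t ((\<alpha>1 * fst p + \<alpha>2) * (poly \<pi> (\<alpha>3 * snd p + \<alpha>4) + (\<alpha>3 * snd p + \<alpha>4)))
           * eF t (poly h (\<alpha>3 * snd p + \<alpha>4)) * \<rho> p)"
        unfolding sum_distrib_left
      proof (intro sum.cong refl)
        fix p :: "'b \<times> 'b"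
        have "eF t ((\<alpha>1 * fst p + \<alpha>2) * (poly \<pi> (\<alpha>3 * snd p + \<alpha>4) + (\<alpha>3 * snd p + \<alpha>4)))
           = eF t ((\<alpha>1 * fst p + \<alpha>2) * poly \<pi> (\<alpha>3 * snd p + \<alpha>4)) * eF t ((\<alpha>1 * fst p + \<alpha>2) * (\<alpha>3 * snd p + \<alpha>4))"
          by (simp add: distrib_left eF_add[OF card_b])
        thus "chi (Fb p) * eF n (\<mu> * \<phi> p) = chi c * (eF t ((\<alpha>1 * fst p + \<alpha>2) * (poly \<pi> (\<alpha>3 * snd p + \<alpha>4) + (\<alpha>3 * snd p + \<alpha>4)))
           * eF t (poly h (\<alpha>3 * snd p + \<alpha>4)) * \<rho> p)"
          unfolding chiFb \<rho>_def by (simp add: mult_ac)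
      qed
      finally have eq: "(\<Sum>x\<in>UNIV. chi (G x + to_bit (tr n (\<mu> * x)))) = chi c * (\<Sum>p\<in>UNIV. eF t ((\<alpha>1 * fst p + \<alpha>2) * (\<lambda>y. poly \<pi> y + y) (\<alpha>3 * snd p + \<alpha>4))
           * eF t (poly h (\<alpha>3 * snd p + \<alpha>4)) * \<rho> p)" by simp
      have "cmod (\<Sum>x\<in>UNIV. chi (G x + to_bit (tr n (\<mu> * x)))) = 2 ^ t"
        unfolding eq using MM[OF card_b bijP a1 a3 mc pm, of \<alpha>2 \<alpha>4 "poly h"] chi_pm[of c] C2
        by (auto simp: norm_mult norm_power)
      thus "cmod (\<Sum>x\<in>UNIV. chi (G x + to_bit (tr n (\<mu> * x)))) = 2 powr (real n / 2)"
        unfolding pw .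
    qed
    have nega: "negabent n a G"
      unfolding negabent_def
    proof
      fix \<mu> :: 'a
      define \<rho>1 where "\<rho>1 p = eF n (\<mu> * \<phi> p) * ph n t a (\<phi> p)" for p
      define \<rho>2 where "\<rho>2 p = \<rho>1 p * eF n (1 * \<phi> p)" for p
      have mc1: "mchar \<rho>1" unfolding \<rho>1_def
      proof (intro mchar_mult mcA)
        show "mchar (\<lambda>p. ph n t a (\<phi> p))"
          using ph_mchar[OF ctx] unfolding mchar_def by (simp add: phi_add)
      qed
      have pm1': "pm1 \<rho>1" unfolding \<rho>1_def
      proof (intro pm1_mult eF_pm1)
        show "pm1 (\<lambda>p. ph n t a (\<phi> p))" using ph_pm1[OF ctx] unfolding pm1_def by blast
      qed
      have mc2: "mchar \<rho>2" unfolding \<rho>2_def by (intro mchar_mult mc1 mcA)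
      have pm2: "pm1 \<rho>2" unfolding \<rho>2_def by (intro pm1_mult pm1' eF_pm1)
      define T where "T p = eF t ((\<alpha>1 * fst p + \<alpha>2) * poly \<pi> (\<alpha>3 * snd p + \<alpha>4)) * eF t (poly h (\<alpha>3 * snd p + \<alpha>4))" for p
      have trm: "chi (Fb p + to_bit (tr n (\<mu> * \<phi> p))) * \<i> ^ wt n a (\<phi> p)
          = (1 + \<i>) / 2 * (T p * \<rho>1 p) + (1 - \<i>) / 2 * (T p * \<rho>2 p)" for p
      proof -
        have "chi (Fb p) * qf n t (\<phi> p) = T p"
          unfolding chiFb qf\<phi> T_def
          using eF_sq[of t "(\<alpha>1 * fst p + \<alpha>2) * (\<alpha>3 * snd p + \<alpha>4)"] eF_sq[of t "\<beta> * fst p"]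
            eF_sq[of t "\<gamma> * snd p"] chi_sq[of c]
          by (simp add: mult_ac)
        hence "chi (Fb p + to_bit (tr n (\<mu> * \<phi> p))) * \<i> ^ wt n a (\<phi> p)
           = T p * \<rho>1 p * ib n (\<phi> p)"
          unfolding chi_add om_decomp[OF ctx] \<rho>1_def eF_def[symmetric] by (simp add: mult_ac)
        also have "\<dots> = (1 + \<i>) / 2 * (T p * \<rho>1 p) + (1 - \<i>) / 2 * (T p * \<rho>2 p)"
          unfolding ib_eF[OF ctx] \<rho>2_def by (simp add: field_simps)
        finally show ?thesis .
      qed
      have "(\<Sum>x\<in>UNIV. chi (G x + to_bit (tr n (\<mu> * x))) * \<i> ^ wt n a x)
          = (1 + \<i>) / 2 * (\<Sum>p\<in>UNIV. T p * \<rho>1 p) + (1 - \<i>) / 2 * (\<Sum>p\<in>UNIV. T p * \<rho>2 p)"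
        unfolding sum\<phi> G trm by (simp add: sum.distrib sum_distrib_left)
      moreover have "(\<Sum>p\<in>UNIV. T p * \<rho>1 p) = of_real (2^t) \<or> (\<Sum>p\<in>UNIV. T p * \<rho>1 p) = - of_real (2^t)"
        using MM[OF card_b bij\<pi> a1 a3 mc1 pm1', of \<alpha>2 \<alpha>4 "poly h"] card_b unfolding T_def by simp
      moreover have "(\<Sum>p\<in>UNIV. T p * \<rho>2 p) = of_real (2^t) \<or> (\<Sum>p\<in>UNIV. T p * \<rho>2 p) = - of_real (2^t)"
        using MM[OF card_b bij\<pi> a1 a3 mc2 pm2, of \<alpha>2 \<alpha>4 "poly h"] card_b unfolding T_def by simp
      ultimately have "cmod (\<Sum>x\<in>UNIV. chi (G x + to_bit (tr n (\<mu> * x))) * \<i> ^ wt n a x) = 2 ^ t"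
        using cmod4 by simp
      thus "cmod (\<Sum>x\<in>UNIV. chi (G x + to_bit (tr n (\<mu> * x))) * \<i> ^ wt n a x) = 2 powr (real n / 2)"
        unfolding pw .
    qed
    show ?thesis unfolding bent_negabent_def using bent nega by blast
  qed
  show ?thesis
  proof (rule main)
    fix p :: "'b \<times> 'b"
    obtain x y where p: "p = (x, y)" by (cases p)
    show "((\<lambda>(x, y).
               to_bit (tr t ((\<alpha>1 * x + \<alpha>2) * poly \<pi> (\<alpha>3 * y + \<alpha>4)))
             + to_bit (tr t (poly h (\<alpha>3 * y + \<alpha>4)))
             + to_bit (tr t ((\<alpha>1 * x + \<alpha>2) * (\<alpha>3 * y + \<alpha>4)))
             + to_bit (tr t (\<beta> * x)) + to_bit (tr t (\<gamma> * y)) + c) \<circ> inv \<phi>) (\<phi> p) = Fb p"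
      using inj\<phi> unfolding p Fb_def by simp
  qed
qed

end
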